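(* Let $p$ be an odd prime and let $G$ be a finite $p$-group with cyclic derived subgroup $G'$. Then every conjugacy class of $G$ is a coset $Kg$ of some subgroup $K\subseteq G'$. *)

theory Defs
  imports "HOL-Algebra.Algebra"
begin

definition conj_class :: "('a, 'b) monoid_scheme \<Rightarrow> 'a \<Rightarrow> 'a set" where
  "conj_class G g = {h \<otimes>\<^bsub>G\<^esub> g \<otimes>\<^bsub>G\<^esub> inv\<^bsub>G\<^esub> h | h. h \<in> carrier G}"

end

theory Submission
  imports Defs "HOL-Number_Theory.Number_Theory"
begin


definition geo :: "nat \<Rightarrow> nat \<Rightarrow> nat" where "geo r n = (\<Sum>i<n. r^i)"

lemma geo_0[simp]: "geo r 0 = 0" by (simp add: geo_def)
lemma geo_Suc: "geo r (Suc n) = geo r n + r^n" by (simp add: geo_def)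

lemma geo_add: "geo r (a+b) = geo r a + r^a * geo r b"
  by (induction b) (auto simp: geo_Suc power_add algebra_simps)

lemma geo_Suc': "geo r (Suc n) = r * geo r n + 1"
  using geo_add[of r 1 n] by (simp add: geo_def)

lemma geo_mult: "geo r (p*d) = geo r p * geo (r^p) d"
proof (induction d)
  case 0 then show ?case by simp
next
  case (Suc d)
  have "geo r (p * Suc d) = geo r (p*d + p)" by (simp add: algebra_simps)
  also have "\<dots> = geo r (p*d) + r^(p*d) * geo r p" by (rule geo_add)
  also have "\<dots> = geo r p * (geo (r^p) d + (r^p)^d)"
  proof -
    have "r^(p*d) = (r^p)^d" by (simp add: power_mult)
    then show ?thesis using Suc by (simp add: algebra_simps)
  qed
  finally show ?case by (simp add: geo_Suc)
qed

lemma geo_cong: "[r = 1] (mod p) \<Longrightarrow> [geo r n = n] (mod p)"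
proof (induction n)
  case 0 then show ?case by simp
next
  case (Suc n)
  have "[r^n = 1^n] (mod p)" using Suc.prems by (rule cong_pow)
  then have "[r^n = 1] (mod p)" by simp
  then have "[geo r n + r^n = n + 1] (mod p)" using cong_add[OF Suc.IH[OF Suc.prems]] by blast
  then show ?case by (simp add: geo_Suc)
qed

lemma sum_id_lt: "2 * (\<Sum>i<n. i) = n * (n - 1::nat)"
  by (induction n) (auto simp: algebra_simps)

lemma pow_cong_sq:
  fixes p t :: nat
  shows "[(1 + p*t)^i = 1 + i*p*t] (mod p^2)"
proof (induction i)
  case 0 then show ?case by simp
next
  case (Suc i)
  have "(1 + p*t)^(Suc i) = (1+p*t)^i * (1 + p*t)" by simp
  have "[(1+p*t)^i * (1 + p*t) = (1 + i*p*t) * (1+p*t)] (mod p^2)"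
    using Suc cong_mult cong_refl by blast
  moreover have "(1 + i*p*t) * (1+p*t) = (1 + Suc i*p*t) + (i*t*t) * p^2"
    by (simp add: algebra_simps power2_eq_square)
  moreover have "[(1 + Suc i*p*t) + (i*t*t) * p^2 = 1 + Suc i*p*t] (mod p^2)"
    by (simp add: cong_def)
  ultimately show ?case by (metis cong_trans power_Suc2)
qed

lemma geo_p:
  fixes p r :: nat
  assumes "Factorial_Ring.prime p" "odd p" "[r = 1] (mod p)"
  shows "[geo r p = p] (mod p^2)"
proof -
  have p1: "p > 1" using assms prime_gt_1_nat by blast
  have "r mod p = 1" using assms(3) p1 by (simp add: cong_def)
  then obtain t where r: "r = 1 + p*t"
    by (metis add.commute div_mult_mod_eq mult.commute)
  obtain q where q: "p = 2*q+1" using assms(2) oddE by blast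
  have "[geo r p = (\<Sum>i<p. 1 + i*p*t)] (mod p^2)"
    unfolding geo_def r by (rule cong_sum) (rule pow_cong_sq)
  moreover have "(\<Sum>i<p. 1 + i*p*t) = p + p*t*(\<Sum>i<p. i)"
  proof -
    have e1: "(\<Sum>i<p. 1 + i*p*t) = (\<Sum>i<p. 1) + (\<Sum>i<p. i*(p*t))"
      by (subst sum.distrib) (simp add: mult.assoc)
    have e2: "(\<Sum>i<p. i*(p*t)) = (\<Sum>i<p. i) * (p*t)" by (rule sum_distrib_right[symmetric])
    show ?thesis using e1 e2 by simp
  qed
  moreover have "(\<Sum>i<p. i) = p*q"
    using sum_id_lt[of p] q by simp
  moreover have "[p + p*t*(p*q) = p] (mod p^2)"
  proof -
    have "p + p*t*(p*q) = p + (t*q)*p^2" by (simp add: algebra_simps power2_eq_square)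
    then show ?thesis by (metis cong_def mod_mult_self1)
  qed
  ultimately show ?thesis by (metis cong_trans)
qed

lemma cancel_p: "[(p::nat)*w = p*1] (mod p*p) \<Longrightarrow> p > 1 \<Longrightarrow> [w = 1] (mod p)"
  unfolding cong_def by (simp add: mod_mult_mult1)

lemma geo_val:
  fixes p :: nat
  assumes "Factorial_Ring.prime p" "odd p"
  shows "[r = 1] (mod p) \<Longrightarrow> p^j dvd geo r d \<Longrightarrow> p^j dvd d"
proof (induction j arbitrary: r d)
  case 0 then show ?case by simp
next
  case (Suc j)
  have p1: "p > 1" using assms prime_gt_1_nat by blast
  have "p dvd p^Suc j" by simp
  then have "p dvd geo r d" using Suc.prems(2) dvd_trans by blast
  moreover have "[geo r d = d] (mod p)" using geo_cong[OF Suc.prems(1)] .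
  ultimately have "p dvd d" by (metis cong_dvd_iff)
  then obtain d' where d: "d = p*d'" by blast
  have gp: "[geo r p = p] (mod p^2)" using geo_p[OF assms Suc.prems(1)] .
  then have "p dvd geo r p"
    by (metis cong_dvd_iff cong_dvd_modulus_nat divides_rexp dvd_refl numeral_2_eq_2)
  then obtain w where w: "geo r p = p*w" by blast
  have "[p*w = p*1] (mod p*p)" using gp w by (simp add: power2_eq_square)
  then have w1: "[w = 1] (mod p)" using p1 cancel_p by blast
  have cw: "coprime p w"
    using w1 by (metis coprime_cong_cong_right coprime_1_right)
  have "p^Suc j dvd p * (w * geo (r^p) d')" using Suc.prems(2) d w geo_mult by (simp add: mult.assoc)
  then have "p^j dvd w * geo (r^p) d'" using p1 by simp
  then have "p^j dvd geo (r^p) d'"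
    using cw by (metis coprime_dvd_mult_right_iff coprime_power_left_iff)
  moreover have "[r^p = 1] (mod p)" using cong_pow[OF Suc.prems(1), of p] by simp
  ultimately have "p^j dvd d'" using Suc.IH by blast
  then show ?case using d by simp
qed

lemma geo_inj_aux:
  fixes p :: nat
  assumes "Factorial_Ring.prime p" "odd p" "[r = 1] (mod p)" "M = p^j"
    and "n1 < n2" "n2 < M" "geo r n1 mod M = geo r n2 mod M"
  shows False
proof -
  define e where "e = n2 - n1"
  have n2: "n2 = n1 + e" using assms(5) e_def by simp
  have e0: "0 < e" "e < M" using assms(5,6) e_def by auto
  have "(geo r n1 + r^n1 * geo r e) mod M = (geo r n1 + 0) mod M"
    using assms(7) n2 geo_add by simp
  then have "M dvd r^n1 * geo r e"
    by (simp add: mod_eq_dvd_iff_nat)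
  moreover have "coprime r p"
    using assms(3) by (simp add: coprime_commute coprime_cong_cong_right)
  then have "coprime (r^n1) M" using assms(4) by simp
  ultimately have "M dvd geo r e" by (metis coprime_commute coprime_dvd_mult_right_iff)
  then have "M dvd e" using geo_val[OF assms(1,2,3)] assms(4) by blast
  then show False using e0 by (simp add: nat_dvd_not_less)
qed

lemma geo_surj:
  fixes p :: nat
  assumes "Factorial_Ring.prime p" "odd p" "[r = 1] (mod p)" "M = p^j"
  shows "\<exists>n. [geo r n = m] (mod M)"
proof -
  have M0: "M > 0" using assms(1,4) by (simp add: prime_gt_0_nat)
  let ?f = "\<lambda>n. geo r n mod M"
  have inj: "inj_on ?f {..<M}"
  proof (rule inj_onI)
    fix a b assume a: "a \<in> {..<M}" and b: "b \<in> {..<M}" and eq: "?f a = ?f b"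
    show "a = b"
    proof (rule ccontr)
      assume "a \<noteq> b"
      then consider "a < b" | "b < a" by linarith
      then show False
      proof cases
        case 1 then show ?thesis using geo_inj_aux[OF assms, of a b] a b eq by auto
      next
        case 2 then show ?thesis using geo_inj_aux[OF assms, of b a] a b eq by auto
      qed
    qed
  qed
  have sub: "?f ` {..<M} \<subseteq> {..<M}" using M0 by auto
  have "card (?f ` {..<M}) = card {..<M::nat}" using card_image[OF inj] by simp
  then have "?f ` {..<M} = {..<M}" using sub by (simp add: card_subset_eq)
  moreover have "m mod M \<in> {..<M}" using M0 by simp
  ultimately obtain n where "geo r n mod M = m mod M" by (metis (no_types, lifting) imageE)
  then show ?thesis unfolding cong_def by blast
qed

lemma fermat_pow:
  fixes p x :: nat
  assumes "Factorial_Ring.prime p"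
  shows "[x^(p^k) = x] (mod p)"
proof (induction k)
  case 0 then show ?case by simp
next
  case (Suc k)
  have xp: "[y^p = y] (mod p)" for y :: nat
  proof (cases "p dvd y")
    case True
    then show ?thesis using assms
      by (metis cong_0_iff cong_pow cong_sym cong_trans not_prime_0 power_0_left)
  next
    case False
    have "[y^(p-1) = 1] (mod p)" using fermat_theorem[OF assms False] .
    then have "[y * y^(p-1) = y * 1] (mod p)" using cong_scalar_left by blast
    moreover have "y * y^(p-1) = y^p" using assms
      by (metis power_eq_if prime_prime_factor_sqrt)
    ultimately show ?thesis by simp
  qed
  have "x^(p^Suc k) = (x^(p^k))^p" by (metis power_Suc2 power_mult)
  then have "[x^(p^Suc k) = x^(p^k)] (mod p)" using xp by simp
  then show ?case using Suc cong_trans by blast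
qed




context group begin

lemma conj_mult:
  assumes "h \<in> carrier G" "x \<in> carrier G" "y \<in> carrier G"
  shows "h \<otimes> (x \<otimes> y) \<otimes> inv h = (h \<otimes> x \<otimes> inv h) \<otimes> (h \<otimes> y \<otimes> inv h)"
proof -
  have "inv h \<otimes> (h \<otimes> z) = z" if "z \<in> carrier G" for z
    using assms(1) that by (simp add: m_assoc[symmetric])
  then show ?thesis using assms by (simp add: m_assoc)
qed

lemma conj_npow:
  assumes "h \<in> carrier G" "x \<in> carrier G"
  shows "h \<otimes> x [^] (k::nat) \<otimes> inv h = (h \<otimes> x \<otimes> inv h) [^] k"
proof (induction k)
  case 0 then show ?case using assms by simp
next
  case (Suc k)
  have "h \<otimes> x [^] Suc k \<otimes> inv h = h \<otimes> (x [^] k \<otimes> x) \<otimes> inv h" by simp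
  also have "\<dots> = (h \<otimes> x [^] k \<otimes> inv h) \<otimes> (h \<otimes> x \<otimes> inv h)"
    using conj_mult assms by simp
  finally show ?case using Suc by simp
qed

lemma pow_cong_eq:
  assumes "x \<in> carrier G" "[a = b] (mod ord x)"
  shows "x [^] (a::nat) = x [^] b"
proof -
  have "int (ord x) dvd (int b - int a)"
    using assms(2) by (metis cong_iff_dvd_diff cong_int_iff cong_sym)
  then have "x [^] int a = x [^] int b" using int_pow_eq assms(1) by blast
  then show ?thesis by (simp add: int_pow_int)
qed

lemma pow_eq_cong:
  assumes "x \<in> carrier G" "x [^] (a::nat) = x [^] b"
  shows "[a = b] (mod ord x)"
proof -
  have "x [^] int a = x [^] int b" using assms(2) by (simp add: int_pow_int)
  then have "int (ord x) dvd (int b - int a)" using int_pow_eq assms(1) by blast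
  then show ?thesis by (metis cong_iff_dvd_diff cong_int_iff cong_sym)
qed

lemma orbit_pow:
  assumes h: "h \<in> carrier G" and g: "g \<in> carrier G" and s: "s \<in> carrier G"
    and hs: "h \<otimes> s \<otimes> inv h = s [^] (\<rho>::nat)" and hg: "h \<otimes> g \<otimes> inv h = s \<otimes> g"
  shows "h [^] n \<otimes> g \<otimes> inv (h [^] n) = s [^] (geo \<rho> n) \<otimes> g"
proof (induction n)
  case 0 then show ?case using g by simp
next
  case (Suc n)
  have hn: "h [^] n \<in> carrier G" using h by simp
  have hS: "h [^] Suc n = h \<otimes> h [^] n" by (rule nat_pow_Suc2[OF h])
  have "h [^] Suc n \<otimes> g \<otimes> inv (h [^] Suc n) = h \<otimes> (h [^] n \<otimes> g \<otimes> inv (h [^] n)) \<otimes> inv h"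
    unfolding hS using h g hn by (simp add: inv_mult_group m_assoc)
  also have "\<dots> = h \<otimes> (s [^] (geo \<rho> n) \<otimes> g) \<otimes> inv h" using Suc by simp
  also have "\<dots> = (h \<otimes> s [^] (geo \<rho> n) \<otimes> inv h) \<otimes> (h \<otimes> g \<otimes> inv h)"
    using conj_mult h g s by simp
  also have "\<dots> = (s [^] \<rho>) [^] (geo \<rho> n) \<otimes> (s \<otimes> g)"
    using conj_npow h s hs hg by simp
  also have "\<dots> = s [^] (\<rho> * geo \<rho> n + 1) \<otimes> g"
    using s g by (simp add: nat_pow_pow m_assoc[symmetric] nat_pow_mult[symmetric])
  finally show ?case by (simp add: geo_Suc')
qed

lemma conj_iter:
  assumes h: "h \<in> carrier G" and s: "s \<in> carrier G"
    and hs: "h \<otimes> s \<otimes> inv h = s [^] (\<rho>::nat)"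
  shows "h [^] n \<otimes> s \<otimes> inv (h [^] n) = s [^] (\<rho>^n)"
proof (induction n)
  case 0 then show ?case using s by simp
next
  case (Suc n)
  have hn: "h [^] n \<in> carrier G" using h by simp
  have hS: "h [^] Suc n = h \<otimes> h [^] n" by (rule nat_pow_Suc2[OF h])
  have "h [^] Suc n \<otimes> s \<otimes> inv (h [^] Suc n) = h \<otimes> (h [^] n \<otimes> s \<otimes> inv (h [^] n)) \<otimes> inv h"
    unfolding hS using h s hn by (simp add: inv_mult_group m_assoc)
  also have "\<dots> = (h \<otimes> s \<otimes> inv h) [^] (\<rho>^n)" using Suc conj_npow h s by simp
  also have "\<dots> = s [^] (\<rho>^Suc n)" using hs s by (simp add: nat_pow_pow mult.commute)
  finally show ?case .
qed

lemma in_gen_of_gcd: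
  assumes x: "x \<in> carrier G" and d: "gcd t (ord x) dvd s"
  shows "x [^] (s::nat) \<in> generate G {x [^] (t::nat)}"
proof -
  obtain \<alpha> \<beta> :: int where ab: "\<alpha> * int t + \<beta> * int (ord x) = gcd (int t) (int (ord x))"
    using bezout_int by blast
  obtain q where q: "s = gcd t (ord x) * q" using d by blast
  have "int s = int q * gcd (int t) (int (ord x))" using q by (simp add: gcd_int_int_eq)
  also have "\<dots> = int q * (\<alpha> * int t + \<beta> * int (ord x))" using ab by simp
  finally have "int s = int t * (\<alpha> * int q) + int (ord x) * (\<beta> * int q)"
    by (simp add: algebra_simps)
  then have "int (ord x) dvd (int s - int t * (\<alpha> * int q))" by simp
  then have "x [^] (int t * (\<alpha> * int q)) = x [^] int s"
    using int_pow_eq x by blast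
  moreover have "(x [^] int t) [^] (\<alpha> * int q) = x [^] (int t * (\<alpha> * int q))"
    using x by (rule int_pow_pow)
  ultimately have "x [^] s = (x [^] int t) [^] (\<alpha> * int q)"
    by (simp add: int_pow_int)
  then have "x [^] s = (x [^] t) [^] (\<alpha> * int q)" by (simp add: int_pow_int)
  then show ?thesis using generate_pow[of "x [^] t"] x by auto
qed

end



context group begin

lemma chain_gen:
  assumes x: "x \<in> carrier G" and pr: "Factorial_Ring.prime p" and od: "ord x dvd p^N"
  shows "x [^] (t::nat) \<in> generate G {x [^] (u::nat)} \<or> x [^] u \<in> generate G {x [^] t}"
proof -
  have "gcd t (ord x) dvd p^N" using od dvd_trans by blast
  then obtain i where i: "gcd t (ord x) = p^i" using divides_primepow_nat[OF pr] by blast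
  have "gcd u (ord x) dvd p^N" using od dvd_trans by blast
  then obtain i' where i': "gcd u (ord x) = p^i'" using divides_primepow_nat[OF pr] by blast
  show ?thesis
  proof (cases "i \<le> i'")
    case True
    then have "gcd t (ord x) dvd gcd u (ord x)" using i i' by (simp add: le_imp_power_dvd)
    then have "gcd t (ord x) dvd u" using dvd_trans gcd_dvd1 by blast
    then show ?thesis using in_gen_of_gcd[OF x] by blast
  next
    case False
    then have "gcd u (ord x) dvd gcd t (ord x)" using i i' by (simp add: le_imp_power_dvd)
    then have "gcd u (ord x) dvd t" using dvd_trans gcd_dvd1 by blast
    then show ?thesis using in_gen_of_gcd[OF x] by blast
  qed
qed

lemma comm_g:
  assumes "h \<in> carrier G" "g \<in> carrier G"
  shows "h \<otimes> g \<otimes> inv h \<otimes> inv g \<otimes> g = h \<otimes> g \<otimes> inv h"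
  using assms by (simp add: m_assoc)

lemma key_A:
  assumes fin: "finite (carrier G)" and p: "Factorial_Ring.prime p" "odd p" and cardG: "order G = p^N"
    and x: "x \<in> carrier G" and Dx: "derived G (carrier G) = {x [^] (k::nat) | k. k \<in> UNIV}"
    and g: "g \<in> carrier G" and h: "h \<in> carrier G"
  shows "generate G {h \<otimes> g \<otimes> inv h \<otimes> inv g} \<subseteq> {h' \<otimes> g \<otimes> inv h' \<otimes> inv g | h'. h' \<in> carrier G}"
proof
  define s where "s = h \<otimes> g \<otimes> inv h \<otimes> inv g"
  have sc: "s \<in> carrier G" using g h by (simp add: s_def)
  have "s \<in> derived_set G (carrier G)" unfolding s_def using g h by blast
  then have sD: "s \<in> derived G (carrier G)" unfolding derived_def by (rule generate.incl)
  obtain k0 :: nat where k0: "s = x [^] k0" using sD Dx by blast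
  have "x [^] (1::nat) \<in> derived G (carrier G)" using Dx by blast
  then have xD: "x \<in> derived G (carrier G)" using x by simp
  have "h \<otimes> x \<otimes> inv h \<in> derived G (carrier G)"
    using normal.inv_op_closed2[OF derived_is_normal[OF normal_self] h xD] .
  then obtain \<rho> :: nat where rho: "h \<otimes> x \<otimes> inv h = x [^] \<rho>" using Dx by blast
  have hs: "h \<otimes> s \<otimes> inv h = s [^] \<rho>"
  proof -
    have "h \<otimes> s \<otimes> inv h = (x [^] \<rho>) [^] k0" using k0 conj_npow[OF h x] rho by simp
    also have "\<dots> = (x [^] k0) [^] \<rho>" using x by (simp add: nat_pow_pow mult.commute)
    finally show ?thesis using k0 by simp
  qed
  have hg: "h \<otimes> g \<otimes> inv h = s \<otimes> g" using comm_g[OF h g] by (simp add: s_def)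
  fix y assume "y \<in> generate G {h \<otimes> g \<otimes> inv h \<otimes> inv g}"
  then obtain m :: nat where y: "y = s [^] m"
    using generate_pow_on_finite_carrier[OF fin sc] unfolding s_def by blast
  have "ord s dvd p^N" using ord_dvd_group_order[OF sc] cardG by simp
  then obtain j where M: "ord s = p^j" using divides_primepow_nat[OF p(1)] by blast
  have "\<exists>n. [geo \<rho> n = m] (mod ord s)"
  proof (cases "j = 0")
    case True
    then show ?thesis using M by (simp add: cong_def)
  next
    case False
    have "h [^] ord h \<otimes> s \<otimes> inv (h [^] ord h) = s [^] (\<rho> ^ ord h)"
      using conj_iter[OF h sc hs] .
    then have "s [^] (1::nat) = s [^] (\<rho> ^ ord h)" using h sc by simp
    then have c1: "[1 = \<rho> ^ ord h] (mod ord s)" using pow_eq_cong[OF sc] by blast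
    have "ord h dvd p^N" using ord_dvd_group_order[OF h] cardG by simp
    then obtain k where k: "ord h = p^k" using divides_primepow_nat[OF p(1)] by blast
    have "p dvd ord s" using M False by simp
    have c2: "[1 = \<rho> ^ (p^k)] (mod ord s)" using c1 k by simp
    have c3: "[1 = \<rho> ^ (p^k)] (mod p)" by (rule cong_dvd_modulus_nat[OF c2 \<open>p dvd ord s\<close>])
    have c4: "[\<rho> ^ (p^k) = \<rho>] (mod p)" using fermat_pow[OF p(1)] .
    have "[\<rho> = 1] (mod p)" by (rule cong_trans[OF cong_sym[OF c4] cong_sym[OF c3]])
    then show ?thesis using geo_surj[OF p(1) p(2) _ M] by blast
  qed
  then obtain n where n: "[geo \<rho> n = m] (mod ord s)" by blast
  have sy: "s [^] geo \<rho> n = y" using pow_cong_eq[OF sc n] y by simp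
  have "h [^] n \<otimes> g \<otimes> inv (h [^] n) = y \<otimes> g" using orbit_pow[OF h g sc hs hg] sy by simp
  then have "h [^] n \<otimes> g \<otimes> inv (h [^] n) \<otimes> inv g = y"
    using g y sc by (simp add: m_assoc)
  then show "y \<in> {h' \<otimes> g \<otimes> inv h' \<otimes> inv g | h'. h' \<in> carrier G}" using h by force
qed

end



theorem mainTheorem4:
  fixes G (structure) and p :: nat
  assumes "group G"
    and "Factorial_Ring.prime p" and "odd p"
    and "finite (carrier G)"
    and "\<exists>n. card (carrier G) = p ^ n"
    and "cyclic_group (G\<lparr>carrier := derived G (carrier G)\<rparr>)"
  shows "\<forall>g \<in> carrier G. \<exists>K. subgroup K G \<and> K \<subseteq> derived G (carrier G)
           \<and> conj_class G g = K #> g"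
proof
  interpret group G by (rule assms(1))
  fix g assume g: "g \<in> carrier G"
  obtain N where cardG: "order G = p^N" using assms(5) unfolding order_def by blast
  let ?D = "derived G (carrier G)"
  have Dsub: "subgroup ?D G" by (rule derived_is_subgroup) simp
  obtain x where x: "x \<in> ?D" and xg: "subgroup_generated (G\<lparr>carrier := ?D\<rparr>) {x} = G\<lparr>carrier := ?D\<rparr>"
    using assms(6) unfolding cyclic_group_def by auto
  have "?D = carrier (subgroup_generated (G\<lparr>carrier := ?D\<rparr>) {x})" using xg by simp
  also have "\<dots> = generate (G\<lparr>carrier := ?D\<rparr>) {x}"
    using x by (simp add: carrier_subgroup_generated Int_absorb1)
  also have "\<dots> = generate G {x}"
  proof -
    have "{x} \<subseteq> ?D" using x by blast
    then show ?thesis by (rule generate_consistent[OF _ Dsub])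
  qed
  finally have DG: "?D = generate G {x}" .
  have xc: "x \<in> carrier G" by (rule subgroup.mem_carrier[OF Dsub x])
  have Dx: "?D = {x [^] (k::nat) | k. k \<in> UNIV}"
    using DG generate_pow_on_finite_carrier[OF assms(4) xc] by simp
  have odx: "ord x dvd p^N" using ord_dvd_group_order[OF xc] cardG by simp
  define S where "S = {h \<otimes> g \<otimes> inv h \<otimes> inv g | h. h \<in> carrier G}"
  have SD: "S \<subseteq> ?D"
  proof
    fix y assume "y \<in> S"
    then obtain h where h: "h \<in> carrier G" and y: "y = h \<otimes> g \<otimes> inv h \<otimes> inv g" unfolding S_def by blast
    have "y \<in> derived_set G (carrier G)" using h g y by blast
    then show "y \<in> ?D" unfolding derived_def by (rule generate.incl)
  qed
  have Sc: "S \<subseteq> carrier G" using SD subgroup.subset[OF Dsub] by (rule subset_trans)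
  have finS: "finite S" by (rule finite_subset[OF Sc assms(4)])
  have oneS: "\<one> \<in> S"
  proof -
    have "\<one> = \<one> \<otimes> g \<otimes> inv \<one> \<otimes> inv g" using g by simp
    then show ?thesis unfolding S_def using one_closed by blast
  qed
  have genS: "generate G {b} \<subseteq> S" if bS0: "b \<in> S" for b
  proof -
    obtain h where h: "h \<in> carrier G" and b: "b = h \<otimes> g \<otimes> inv h \<otimes> inv g"
      using bS0 unfolding S_def by blast
    show ?thesis using key_A[OF assms(4) assms(2) assms(3) cardG xc Dx g h] unfolding b S_def .
  qed
  have "Max (ord ` S) \<in> ord ` S" using finS oneS by (intro Max_in) auto
  then obtain a where aS: "a \<in> S" and aM: "Max (ord ` S) = ord a" by (rule imageE)
  have amax: "ord b \<le> ord a" if "b \<in> S" for b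
    using finS that aM by (metis Max_ge finite_imageI imageI)
  have ac: "a \<in> carrier G" using aS Sc by blast
  have Sa: "S \<subseteq> generate G {a}"
  proof
    fix b assume bS: "b \<in> S"
    have bc: "b \<in> carrier G" using bS Sc by blast
    have "b \<in> {x [^] (k::nat) | k. k \<in> UNIV}" using subsetD[OF SD bS] unfolding Dx .
    then obtain t :: nat where t: "b = x [^] t" by blast
    have "a \<in> {x [^] (k::nat) | k. k \<in> UNIV}" using subsetD[OF SD aS] unfolding Dx .
    then obtain u :: nat where u: "a = x [^] u" by blast
    show "b \<in> generate G {a}"
    proof (cases "b \<in> generate G {a}")
      case True then show ?thesis .
    next
      case False
      then have "a \<in> generate G {b}" using chain_gen[OF xc assms(2) odx, of t u] t u by blast
      then have sub: "generate G {a} \<subseteq> generate G {b}"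
        using generate_subgroup_incl[OF _ generate_is_subgroup] bc by auto
      have fb: "finite (generate G {b})" using generate_incl[of "{b}"] bc assms(4) finite_subset by auto
      have "card (generate G {b}) \<le> card (generate G {a})"
        using amax[OF bS] generate_pow_card[OF ac] generate_pow_card[OF bc] by simp
      then have "generate G {a} = generate G {b}" using sub fb card_subset_eq
        by (metis card_mono le_antisym)
      moreover have "b \<in> generate G {b}" by (rule generate.incl) simp
      ultimately show ?thesis by simp
    qed
  qed
  have SK: "S = generate G {a}" using Sa genS[OF aS] by blast
  show "\<exists>K. subgroup K G \<and> K \<subseteq> ?D \<and> conj_class G g = K #> g"
  proof (intro exI conjI)
    show "subgroup S G" unfolding SK by (rule generate_is_subgroup) (use ac in simp)
    show "S \<subseteq> ?D" by (rule SD)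
    show "conj_class G g = S #> g"
    proof
      show "conj_class G g \<subseteq> S #> g"
      proof
        fix z assume "z \<in> conj_class G g"
        then obtain h where h: "h \<in> carrier G" and z: "z = h \<otimes> g \<otimes> inv h"
          unfolding conj_class_def by blast
        have "z = (h \<otimes> g \<otimes> inv h \<otimes> inv g) \<otimes> g" using comm_g[OF h g] z by simp
        moreover have "h \<otimes> g \<otimes> inv h \<otimes> inv g \<in> S" unfolding S_def using h by blast
        ultimately show "z \<in> S #> g" unfolding r_coset_def by blast
      qed
    next
      show "S #> g \<subseteq> conj_class G g"
      proof
        fix z assume "z \<in> S #> g"
        then obtain y where "y \<in> S" and z: "z = y \<otimes> g" unfolding r_coset_def by blast
        then obtain h where h: "h \<in> carrier G" and y: "y = h \<otimes> g \<otimes> inv h \<otimes> inv g"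
          unfolding S_def by blast
        have "z = h \<otimes> g \<otimes> inv h" using comm_g[OF h g] z y by simp
        then show "z \<in> conj_class G g" unfolding conj_class_def using h by blast
      qed
    qed
  qed
qed


end
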